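(* Let $X$ be sampled uniformly at random from $\{0,1,2,3\}^n$. Then $\Pr[X \text{ is regular}]\ge 7/8$.
   Context: Logarithms are base $2$. Define $w(0)=0$, $w(1)=1$, $w(2)=2\log n+11$, $w(3)=2\log n+12$. A string $x\in\{0,1,2,3\}^n$ is regular if for every symbol $a\in\{0,1,2,3\}$ and all $1\le j\le k\le n$ such that some $i\in[j,k]$ has $x_i\ne a$, it holds that $\sum_{i=j}^k (w(x_i)-w(a))\neq 0$. *)

theory Defs
  imports "HOL-Probability.Probability"
begin

definition wt :: "nat \<Rightarrow> nat \<Rightarrow> real" where
  "wt n a = (if a = 0 then 0 else if a = 1 then 1
             else if a = 2 then 2 * log 2 (real n) + 11
             else 2 * log 2 (real n) + 12)"

text \<open>Strings in {0,1,2,3}^n as lists of length n (0-indexed positions).\<close>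
definition strings :: "nat \<Rightarrow> nat list set" where
  "strings n = {xs. length xs = n \<and> set xs \<subseteq> {0..3}}"

definition regular :: "nat list \<Rightarrow> bool" where
  "regular xs = (let n = length xs in
     \<forall>a \<in> {0..3::nat}. \<forall>j k. j \<le> k \<and> k < n \<and> (\<exists>i\<in>{j..k}. xs ! i \<noteq> a) \<longrightarrow>
        (\<Sum>i=j..k. wt n (xs ! i) - wt n a) \<noteq> 0)"

end

theory Submission
  imports Defs
begin

lemma card_lists_nth:
  shows "card {xs. length xs = n \<and> (\<forall>m<n. xs!m \<in> A m)} = (\<Prod>m<n. card (A m))"
proof -
  have "bij_betw (\<lambda>xs. restrict (nth xs) {..<n}) {xs. length xs = n \<and> (\<forall>m<n. xs!m \<in> A m)} (PiE {..<n} A)"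
  proof (rule bij_betw_byWitness[where f'="\<lambda>f. map f [0..<n]"])
    show "\<forall>a\<in>{xs. length xs = n \<and> (\<forall>m<n. xs!m \<in> A m)}. map (restrict (nth a) {..<n}) [0..<n] = a"
      by (auto intro: nth_equalityI)
    show "\<forall>a'\<in>PiE {..<n} A. restrict (nth (map a' [0..<n])) {..<n} = a'"
    proof
      fix a' assume a': "a' \<in> PiE {..<n} A"
      show "restrict (nth (map a' [0..<n])) {..<n} = a'"
      proof
        fix x show "restrict (nth (map a' [0..<n])) {..<n} x = a' x"
        proof (cases "x < n")
          case True then show ?thesis by simp
        next
          case False
          then have "a' x = undefined" using PiE_arb[OF a', of x] False by simp
          then show ?thesis using False by simp
        qed
      qed
    qed
    show "(\<lambda>xs. restrict (nth xs) {..<n}) ` {xs. length xs = n \<and> (\<forall>m<n. xs!m \<in> A m)} \<subseteq> PiE {..<n} A"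
    proof (rule image_subsetI)
      fix xs assume "xs \<in> {xs. length xs = n \<and> (\<forall>m<n. xs!m \<in> A m)}"
      then show "restrict (nth xs) {..<n} \<in> PiE {..<n} A" by (subst restrict_PiE_iff) auto
    qed
    show "(\<lambda>f. map f [0..<n]) ` PiE {..<n} A \<subseteq> {xs. length xs = n \<and> (\<forall>m<n. xs!m \<in> A m)}"
    proof (rule image_subsetI)
      fix f assume f: "f \<in> PiE {..<n} A"
      have "\<forall>m<n. f m \<in> A m" using PiE_mem[OF f] by simp
      then show "map f [0..<n] \<in> {xs. length xs = n \<and> (\<forall>m<n. xs!m \<in> A m)}" by simp
    qed
  qed
  then have "card {xs. length xs = n \<and> (\<forall>m<n. xs!m \<in> A m)} = card (PiE {..<n} A)"
    by (rule bij_betw_same_card)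
  also have "\<dots> = (\<Prod>m<n. card (A m))" by (rule card_PiE) simp
  finally show ?thesis .
qed

lemma tw_lt:
  assumes "\<forall>i. i + r \<le> length ys \<longrightarrow> (\<exists>t<r. ys!(i+t) \<notin> S)"
  shows "length (takeWhile (\<lambda>x. x \<in> S) ys) < r"
proof (rule ccontr)
  assume "\<not> ?thesis"
  hence r: "r \<le> length (takeWhile (\<lambda>x. x\<in>S) ys)" by simp
  hence "r \<le> length ys" using length_takeWhile_le order_trans by blast
  then obtain t where t: "t < r" "ys!t \<notin> S" using assms by force
  have "t < length (takeWhile (\<lambda>x. x\<in>S) ys)" using t r by simp
  hence "ys!t \<in> S" by (metis nth_mem set_takeWhileD takeWhile_nth)
  then show False using t by simp
qed

lemma run_sum:
  fixes f :: "nat \<Rightarrow> real"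
  assumes "\<forall>x\<in>set ys. x\<in>S \<longrightarrow> f x \<ge> -1" "\<forall>x\<in>set ys. x\<notin>S \<longrightarrow> f x \<ge> D"
   "\<forall>i. i + r \<le> length ys \<longrightarrow> (\<exists>t<r. ys!(i+t) \<notin> S)"
  shows "sum_list (map f ys) + length (takeWhile (\<lambda>x. x\<in>S) ys) \<ge> (D - (real r - 1)) * length (filter (\<lambda>x. x\<notin>S) ys)"
using assms proof (induction ys)
  case Nil then show ?case by simp
next
  case (Cons x zs)
  have run: "\<forall>i. i + r \<le> length zs \<longrightarrow> (\<exists>t<r. zs!(i+t) \<notin> S)"
  proof (intro allI impI)
    fix i assume "i + r \<le> length zs"
    then have "Suc i + r \<le> length (x#zs)" by simp
    then obtain t where "t<r" "(x#zs)!(Suc i+t) \<notin> S" using Cons.prems(3) by blast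
    then show "\<exists>t<r. zs!(i+t) \<notin> S" by auto
  qed
  have IH: "sum_list (map f zs) + length (takeWhile (\<lambda>x. x\<in>S) zs) \<ge> (D - (real r - 1)) * length (filter (\<lambda>x. x\<notin>S) zs)"
    using Cons.IH Cons.prems run by auto
  show ?case
  proof (cases "x \<in> S")
    case True then show ?thesis using IH Cons.prems(1) by simp
  next
    case False
    have "length (takeWhile (\<lambda>x. x\<in>S) zs) < r" using tw_lt run by blast
    hence p: "real (length (takeWhile (\<lambda>x. x\<in>S) zs)) \<le> real r - 1" by linarith
    have fx: "f x \<ge> D" using Cons.prems(2) False by simp
    have "(D - (real r - 1)) * length (filter (\<lambda>x. x\<notin>S) (x#zs))
        = (D - (real r - 1)) + (D - (real r - 1)) * length (filter (\<lambda>x. x\<notin>S) zs)"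
      using False by (simp add: algebra_simps)
    then show ?thesis using IH p fx False by simp
  qed
qed

lemma seg_pos:
  fixes f :: "nat \<Rightarrow> real"
  assumes "set xs \<subseteq> {0..3}" "j \<le> k" "k < length xs"
   "\<forall>x\<in>{0..3}. x\<in>S \<longrightarrow> f x \<ge> -1" "\<forall>x\<in>{0..3}. x\<notin>S \<longrightarrow> f x \<ge> D"
   "\<forall>i. i + r \<le> length xs \<longrightarrow> (\<exists>t<r. xs!(i+t) \<notin> S)"
   "i0 \<in> {j..k}" "xs!i0 \<notin> S" "D > 2*(real r - 1)"
  shows "(\<Sum>i=j..k. f (xs!i)) > 0"
proof -
  define ys where "ys = map (nth xs) [j..<Suc k]"
  have sum: "(\<Sum>i=j..k. f (xs!i)) = sum_list (map f ys)"
    unfolding ys_def by (simp only: map_map interv_sum_list_conv_sum_set_nat set_upt atLeastLessThanSuc_atLeastAtMost comp_def)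
  have allx: "\<forall>i<length xs. xs!i \<in> {0..3}" using assms(1) nth_mem by blast
  have setys: "set ys \<subseteq> {0..3}" using allx assms(2,3) by (auto simp: ys_def)
  have runys: "\<forall>i. i + r \<le> length ys \<longrightarrow> (\<exists>t<r. ys!(i+t) \<notin> S)"
  proof (intro allI impI)
    fix i assume a: "i + r \<le> length ys"
    then have "j + i + r \<le> length xs" using assms(2,3) by (simp add: ys_def)
    then obtain t where t: "t<r" "xs!(j+i+t) \<notin> S" using assms(6) by blast
    moreover have "ys!(i+t) = xs!(j+i+t)" using a t by (simp add: ys_def add.assoc del: upt_Suc)
    ultimately show "\<exists>t<r. ys!(i+t) \<notin> S" by auto
  qed
  have main: "sum_list (map f ys) + length (takeWhile (\<lambda>x. x\<in>S) ys) \<ge> (D - (real r - 1)) * length (filter (\<lambda>x. x\<notin>S) ys)"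
    using run_sum[of ys S f D r] setys assms(4,5) runys by blast
  have "length (takeWhile (\<lambda>x. x\<in>S) ys) < r" using tw_lt runys by blast
  hence p: "real (length (takeWhile (\<lambda>x. x\<in>S) ys)) \<le> real r - 1" by linarith
  have "xs!i0 \<in> set ys" using assms(7) unfolding ys_def set_map set_upt by auto
  hence "filter (\<lambda>x. x\<notin>S) ys \<noteq> []" using assms(8) by (metis (mono_tags, lifting) filter_empty_conv)
  hence m: "real (length (filter (\<lambda>x. x\<notin>S) ys)) \<ge> 1" by (simp add: Suc_leI)
  have C: "D - (real r - 1) > 0" using assms(9) p by (smt (verit) of_nat_0_le_iff)
  have "(D - (real r - 1)) * length (filter (\<lambda>x. x\<notin>S) ys) \<ge> (D - (real r - 1))"
    using mult_left_mono[OF m, of "D - (real r - 1)"] C by simp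
  then show ?thesis using sum main p assms(9) by (smt (verit))
qed


lemma ball4: "(\<forall>x\<in>{0..3::nat}. P x) \<longleftrightarrow> P 0 \<and> P 1 \<and> P 2 \<and> P 3"
proof
  assume "P 0 \<and> P 1 \<and> P 2 \<and> P 3"
  moreover have "{0..3::nat} = {0,1,2,3}" by auto
  ultimately show "\<forall>x\<in>{0..3::nat}. P x" by auto
qed auto
lemma four: "x \<in> {0..3::nat} \<Longrightarrow> x = 0 \<or> x = 1 \<or> x = 2 \<or> x = 3"
  by auto

lemma det:
  assumes xs: "xs \<in> strings n" and q: "real q < log 2 (real n) + 1"
  and n1: "\<forall>i. i + (q+5) \<le> length xs \<longrightarrow> (\<exists>t<q+5. xs!(i+t) \<notin> {0,1})"
  and n2: "\<forall>i. i + (q+5) \<le> length xs \<longrightarrow> (\<exists>t<q+5. xs!(i+t) \<notin> {2,3})"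
  shows "regular xs"
proof -
  have len: "length xs = n" and set: "set xs \<subseteq> {0..3}" using xs by (auto simp: strings_def)
  have D: "2 * log 2 (real n) + 10 > 2 * (real (q+5) - 1)" using q by simp
  show ?thesis unfolding regular_def Let_def len
  proof (intro ballI allI impI)
    fix a j k assume a: "a \<in> {0..3::nat}" and jk: "j \<le> k \<and> k < n \<and> (\<exists>i\<in>{j..k}. xs!i \<noteq> a)"
    then obtain i1 where i1: "i1 \<in> {j..k}" "xs!i1 \<noteq> a" by blast
    have allx: "\<forall>i<n. xs!i \<in> {0..3}" using set len nth_mem by blast
    have xi: "xs!i = 0 \<or> xs!i = 1 \<or> xs!i = 2 \<or> xs!i = 3" if "i \<in> {j..k}" for i
      using allx jk that four by auto
    have L0: "log 2 (real n) \<ge> 0" using jk by simp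
    have neg: "(\<Sum>i=j..k. wt n (xs!i) - wt n a) = - (\<Sum>i=j..k. wt n a - wt n (xs!i))"
      by (simp add: sum_subtractf)
    have "a = 0 \<or> a = 1 \<or> a = 2 \<or> a = 3" using a four by blast
    moreover
    { assume a0: "a = 0"
      have "0 < (\<Sum>i=j..k. wt n (xs!i) - wt n a)"
      proof (rule sum_pos2[OF _ i1(1)])
        show "finite {j..k}" by simp
        show "0 < wt n (xs!i1) - wt n a" using xi[OF i1(1)] i1(2) a0 L0 by (auto simp: wt_def)
        fix i assume "i \<in> {j..k}" then show "0 \<le> wt n (xs!i) - wt n a" using xi[of i] a0 L0 by (auto simp: wt_def)
      qed
      hence "(\<Sum>i=j..k. wt n (xs!i) - wt n a) \<noteq> 0" by simp }
    moreover
    { assume a3: "a = 3"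
      have "0 < (\<Sum>i=j..k. wt n a - wt n (xs!i))"
      proof (rule sum_pos2[OF _ i1(1)])
        show "finite {j..k}" by simp
        show "0 < wt n a - wt n (xs!i1)" using xi[OF i1(1)] i1(2) a3 L0 by (auto simp: wt_def)
        fix i assume "i \<in> {j..k}" then show "0 \<le> wt n a - wt n (xs!i)" using xi[of i] a3 L0 by (auto simp: wt_def)
      qed
      hence "(\<Sum>i=j..k. wt n (xs!i) - wt n a) \<noteq> 0" using neg by simp }
    moreover
    { assume a1: "a = 1"
      have "(\<Sum>i=j..k. wt n (xs!i) - wt n a) \<noteq> 0"
      proof (cases "\<exists>i0\<in>{j..k}. xs!i0 \<notin> {0,1}")
        case True
        then obtain i0 where i0: "i0 \<in> {j..k}" "xs!i0 \<notin> {0,1}" by blast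
        have "(\<Sum>i=j..k. (\<lambda>x. wt n x - wt n 1) (xs!i)) > 0"
        proof (rule seg_pos[where f="\<lambda>x. wt n x - wt n 1" and S="{0,1}" and D="2 * log 2 (real n) + 10" and r="q+5", OF set])
          show "j \<le> k" "k < length xs" using jk len by auto
          show "\<forall>x\<in>{0..3}. x \<in> {0, 1} \<longrightarrow> - 1 \<le> wt n x - wt n 1" by (simp add: ball4 wt_def)
          show "\<forall>x\<in>{0..3}. x \<notin> {0, 1} \<longrightarrow> 2 * log 2 (real n) + 10 \<le> wt n x - wt n 1" by (simp add: ball4 wt_def)
        qed (fact n1, fact i0(1), fact i0(2), fact D)
        then show ?thesis using a1 by simp
      next
        case False
        have "0 < (\<Sum>i=j..k. wt n a - wt n (xs!i))"
        proof (rule sum_pos2[OF _ i1(1)])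
          show "finite {j..k}" by simp
          have "xs!i1 = 0" using False i1 a1 by auto
          then show "0 < wt n a - wt n (xs!i1)" using a1 by (simp add: wt_def)
          fix i assume "i \<in> {j..k}" then have "xs!i = 0 \<or> xs!i = 1" using False by auto
          then show "0 \<le> wt n a - wt n (xs!i)" using a1 by (auto simp: wt_def)
        qed
        then show ?thesis using neg by simp
      qed }
    moreover
    { assume a2: "a = 2"
      have "(\<Sum>i=j..k. wt n (xs!i) - wt n a) \<noteq> 0"
      proof (cases "\<exists>i0\<in>{j..k}. xs!i0 \<notin> {2,3}")
        case True
        then obtain i0 where i0: "i0 \<in> {j..k}" "xs!i0 \<notin> {2,3}" by blast
        have "(\<Sum>i=j..k. (\<lambda>x. wt n 2 - wt n x) (xs!i)) > 0"
        proof (rule seg_pos[where f="\<lambda>x. wt n 2 - wt n x" and S="{2,3}" and D="2 * log 2 (real n) + 10" and r="q+5", OF set])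
          show "j \<le> k" "k < length xs" using jk len by auto
          show "\<forall>x\<in>{0..3}. x \<in> {2, 3} \<longrightarrow> - 1 \<le> wt n 2 - wt n x" by (simp add: ball4 wt_def)
          show "\<forall>x\<in>{0..3}. x \<notin> {2, 3} \<longrightarrow> 2 * log 2 (real n) + 10 \<le> wt n 2 - wt n x" by (simp add: ball4 wt_def)
        qed (fact n2, fact i0(1), fact i0(2), fact D)
        then show ?thesis using a2 neg by simp
      next
        case False
        have "0 < (\<Sum>i=j..k. wt n (xs!i) - wt n a)"
        proof (rule sum_pos2[OF _ i1(1)])
          show "finite {j..k}" by simp
          have "xs!i1 = 3" using False i1 a2 by auto
          then show "0 < wt n (xs!i1) - wt n a" using a2 by (simp add: wt_def)
          fix i assume "i \<in> {j..k}" then have "xs!i = 2 \<or> xs!i = 3" using False by auto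
          then show "0 \<le> wt n (xs!i) - wt n a" using a2 by (auto simp: wt_def)
        qed
        then show ?thesis by simp
      qed }
    ultimately show "(\<Sum>i=j..k. wt n (xs!i) - wt n a) \<noteq> 0" by blast
  qed
qed

lemma card_bad:
  assumes S: "S \<subseteq> {0..3::nat}" "card S = 2" and r: "0 < r"
  shows "real (card {xs \<in> strings n. \<exists>i. i + r \<le> n \<and> (\<forall>t<r. xs!(i+t) \<in> S)}) * 2^r \<le> real n * 4^n"
proof (cases "r \<le> n")
  case False
  then have e: "{xs \<in> strings n. \<exists>i. i + r \<le> n \<and> (\<forall>t<r. xs!(i+t) \<in> S)} = {}" by auto
  have "card {xs \<in> strings n. \<exists>i. i + r \<le> n \<and> (\<forall>t<r. xs!(i+t) \<in> S)} = 0"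
    by (simp only: e card.empty)
  then show ?thesis by simp
next
  case True
  define W where "W i = {xs. length xs = n \<and> (\<forall>m<n. xs!m \<in> (if i \<le> m \<and> m < i + r then S else {0..3}))}" for i
  have sub: "{xs \<in> strings n. \<exists>i. i + r \<le> n \<and> (\<forall>t<r. xs!(i+t) \<in> S)} \<subseteq> (\<Union>i\<in>{..n-r}. W i)"
  proof
    fix xs assume "xs \<in> {xs \<in> strings n. \<exists>i. i + r \<le> n \<and> (\<forall>t<r. xs!(i+t) \<in> S)}"
    then obtain i where xs: "xs \<in> strings n" "i + r \<le> n" "\<forall>t<r. xs!(i+t) \<in> S" by blast
    have len: "length xs = n" and set: "set xs \<subseteq> {0..3}" using xs(1) by (auto simp: strings_def)
    have "xs \<in> W i" unfolding W_def
    proof (intro CollectI conjI allI impI)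
      show "length xs = n" by (rule len)
      fix m assume m: "m < n"
      show "xs!m \<in> (if i \<le> m \<and> m < i + r then S else {0..3})"
      proof (cases "i \<le> m \<and> m < i + r")
        case True
        then have "m - i < r" by linarith
        then have "xs!(i + (m-i)) \<in> S" using xs(3) by blast
        then show ?thesis using True by simp
      next
        case False
        have "xs!m \<in> set xs" using m len by simp
        then show ?thesis using False set by auto
      qed
    qed
    then show "xs \<in> (\<Union>i\<in>{..n-r}. W i)" using xs(2) by auto
  qed
  have cW: "card (W i) = 2^r * 4^(n-r)" if i: "i + r \<le> n" for i
  proof -
    have "card (W i) = (\<Prod>m<n. card (if i \<le> m \<and> m < i + r then S else {0..3::nat}))"
      unfolding W_def by (rule card_lists_nth)
    also have "\<dots> = (\<Prod>m<n. if i \<le> m \<and> m < i + r then 2 else 4)"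
      using S by (intro prod.cong) auto
    also have "\<dots> = (\<Prod>m\<in>{..<n} \<inter> {m. i \<le> m \<and> m < i + r}. 2) * (\<Prod>m\<in>{..<n} \<inter> - {m. i \<le> m \<and> m < i + r}. 4)"
      by (rule prod.If_cases) simp
    also have "{..<n} \<inter> {m. i \<le> m \<and> m < i + r} = {i..<i+r}" using i by auto
    also have "{..<n} \<inter> - {m. i \<le> m \<and> m < i + r} = {..<n} - {i..<i+r}" by auto
    finally have e: "card (W i) = (\<Prod>m\<in>{i..<i+r}. 2) * (\<Prod>m\<in>{..<n} - {i..<i+r}. 4)" .
    have c: "card ({..<n} - {i..<i+r}) = n - r"
      using i by (subst card_Diff_subset) auto
    show ?thesis unfolding e using c by simp
  qed
  have finS: "finite (strings n)" unfolding strings_def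
    using finite_lists_length_eq[of "{0..3::nat}" n] by (simp add: conj_commute)
  have WS: "W i \<subseteq> strings n" for i
  proof
    fix xs assume xs: "xs \<in> W i"
    have "set xs \<subseteq> {0..3}"
    proof
      fix y assume "y \<in> set xs"
      then obtain m where m: "m < length xs" "xs!m = y" by (auto simp: in_set_conv_nth)
      then show "y \<in> {0..3}" using xs S(1) unfolding W_def by (auto split: if_splits)
    qed
    then show "xs \<in> strings n" using xs unfolding W_def strings_def by simp
  qed
  have finW: "finite (W i)" for i using finS WS finite_subset by blast
  have "card {xs \<in> strings n. \<exists>i. i + r \<le> n \<and> (\<forall>t<r. xs!(i+t) \<in> S)} \<le> card (\<Union>i\<in>{..n-r}. W i)"
    by (rule card_mono[OF _ sub]) (simp add: finW)
  also have "\<dots> \<le> (\<Sum>i\<in>{..n-r}. card (W i))" by (rule card_UN_le) simp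
  also have "\<dots> = (\<Sum>i\<in>{..n-r}. 2^r * 4^(n-r))"
    by (rule sum.cong) (use cW True in auto)
  also have "\<dots> = (n - r + 1) * (2^r * 4^(n-r))" by simp
  finally have cb: "card {xs \<in> strings n. \<exists>i. i + r \<le> n \<and> (\<forall>t<r. xs!(i+t) \<in> S)} \<le> (n - r + 1) * (2^r * 4^(n-r))" .
  have "(n - r + 1) * (2^r * 4^(n-r)) * 2^r = (n - r + 1) * ((2^r * 2^r) * 4^(n-r))" by (simp only: mult_ac)
  also have "2^r * 2^r = (4::nat)^r" by (simp add: power_mult_distrib[symmetric])
  also have "(n - r + 1) * (4^r * 4^(n-r)) = (n - r + 1) * (4::nat)^n"
    using True by (simp add: power_add[symmetric])
  also have "\<dots> \<le> n * 4^n" using True r by (intro mult_le_mono1) linarith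
  finally have "card {xs \<in> strings n. \<exists>i. i + r \<le> n \<and> (\<forall>t<r. xs!(i+t) \<in> S)} * 2^r \<le> n * 4^n"
    using cb by (meson le_trans mult_le_mono1)
  then have "real (card {xs \<in> strings n. \<exists>i. i + r \<le> n \<and> (\<forall>t<r. xs!(i+t) \<in> S)} * 2^r) \<le> real (n * 4^n)"
    by (simp only: of_nat_le_iff)
  then show ?thesis by simp
qed

theorem lemma2:
  fixes n :: nat
  shows "measure_pmf.prob (pmf_of_set (strings n)) {xs. regular xs} \<ge> 7/8"
proof -
  define q where "q = (LEAST q. n \<le> 2^q)"
  have ex: "\<exists>q. n \<le> 2^q" by (metis less_exp less_imp_le)
  have q1: "n \<le> 2^q" unfolding q_def by (rule LeastI_ex[OF ex])
  have q2: "real q < log 2 (real n) + 1"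
  proof (cases "q = 0")
    case True
    have "log 2 (real n) \<ge> 0"
    proof (cases "n = 0")
      case True then show ?thesis by (simp add: log_def)
    next
      case False then show ?thesis by simp
    qed
    then show ?thesis using True by simp
  next
    case False
    have lt: "q - 1 < (LEAST q. n \<le> 2^q)" using False unfolding q_def[symmetric] by simp
    have "\<not> n \<le> 2^(q-1)" by (rule not_less_Least[OF lt])
    then have "2^(q-1) < n" by simp
    then have "real (q-1) < log 2 (real n)" by (rule less_log2_of_power)
    then show ?thesis using False by (simp add: of_nat_diff)
  qed
  define r where "r = q + 5"
  define B1 where "B1 = {xs \<in> strings n. \<exists>i. i + r \<le> n \<and> (\<forall>t<r. xs!(i+t) \<in> {0,1})}"
  define B2 where "B2 = {xs \<in> strings n. \<exists>i. i + r \<le> n \<and> (\<forall>t<r. xs!(i+t) \<in> {2,3})}"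
  have finS: "finite (strings n)" unfolding strings_def
    using finite_lists_length_eq[of "{0..3::nat}" n] by (simp add: conj_commute)
  have cardS: "card (strings n) = 4^n" unfolding strings_def
    using card_lists_length_eq[of "{0..3::nat}" n] by (simp add: conj_commute)
  have neS: "strings n \<noteq> {}"
  proof -
    have "set (replicate n (0::nat)) \<subseteq> {0..3}" by (cases n) auto
    then have "replicate n 0 \<in> strings n" by (simp add: strings_def)
    then show ?thesis by blast
  qed
  have sub: "strings n \<subseteq> (strings n \<inter> {xs. regular xs}) \<union> B1 \<union> B2"
  proof
    fix xs assume xs: "xs \<in> strings n"
    have len: "length xs = n" using xs by (simp add: strings_def)
    show "xs \<in> (strings n \<inter> {xs. regular xs}) \<union> B1 \<union> B2"
    proof (cases "xs \<in> B1 \<or> xs \<in> B2")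
      case True then show ?thesis by blast
    next
      case False
      have n1: "\<forall>i. i + (q+5) \<le> length xs \<longrightarrow> (\<exists>t<q+5. xs!(i+t) \<notin> {0,1})"
        using False xs len unfolding B1_def r_def by blast
      have n2: "\<forall>i. i + (q+5) \<le> length xs \<longrightarrow> (\<exists>t<q+5. xs!(i+t) \<notin> {2,3})"
        using False xs len unfolding B2_def r_def by blast
      have "regular xs" by (rule det[OF xs q2 n1 n2])
      then show ?thesis using xs by blast
    qed
  qed
  have finR: "finite (strings n \<inter> {xs. regular xs})" using finS by simp
  have finB1: "finite B1" using finS unfolding B1_def by simp
  have finB2: "finite B2" using finS unfolding B2_def by simp
  have "card (strings n) \<le> card ((strings n \<inter> {xs. regular xs}) \<union> B1 \<union> B2)"
    by (rule card_mono) (use finR finB1 finB2 sub in auto)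
  also have "\<dots> \<le> card (strings n \<inter> {xs. regular xs}) + card B1 + card B2"
    by (metis (no_types, lifting) add_le_mono1 card_Un_le le_trans)
  finally have cs: "real (4^n) \<le> real (card (strings n \<inter> {xs. regular xs})) + real (card B1) + real (card B2)"
    using cardS by linarith
  have r0: "0 < r" unfolding r_def by simp
  have b1: "real (card B1) * 2^r \<le> real n * 4^n" unfolding B1_def by (rule card_bad[OF _ _ r0]) auto
  have b2: "real (card B2) * 2^r \<le> real n * 4^n" unfolding B2_def by (rule card_bad[OF _ _ r0]) auto
  have pq: "(2::real)^r = 32 * 2^q" unfolding r_def by (simp add: power_add)
  have nq: "real n \<le> 2^q" using q1 by (metis of_nat_le_iff of_nat_numeral of_nat_power)
  have gen: "X * 32 \<le> 4^n" if X: "X * 2^r \<le> real n * 4^n" "X \<ge> 0" for X :: real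
  proof -
    have "(X * 32) * 2^q \<le> 4^n * 2^q"
    proof -
      have "(X * 32) * 2^q = X * 2^r" using pq by simp
      also have "\<dots> \<le> real n * 4^n" by (rule X(1))
      also have "\<dots> \<le> 2^q * 4^n" using nq by (intro mult_right_mono) auto
      finally show ?thesis by (simp add: mult.commute)
    qed
    then show ?thesis by simp
  qed
  have c1: "real (card B1) * 32 \<le> 4^n" using gen b1 by simp
  have c2: "real (card B2) * 32 \<le> 4^n" using gen b2 by simp
  have R: "real (card (strings n \<inter> {xs. regular xs})) \<ge> 7/8 * 4^n" using cs c1 c2 by simp
  have "measure_pmf.prob (pmf_of_set (strings n)) {xs. regular xs} = real (card (strings n \<inter> {xs. regular xs})) / 4^n"
    using measure_pmf_of_set[OF neS finS] cardS by simp
  also have "\<dots> \<ge> 7/8" using R by (simp add: field_simps)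
  finally show ?thesis .
qed

end
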